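(* Let $S$ be a compact connected surface, with or without boundary, and let $M = S\times\mathbb{R}$ (the trivial line bundle over $S$), assumed orientable. Suppose that a group $G$ acts on $M$ by covering transformations, and that $M$ carries a Riemannian metric for which this action is by isometries. Suppose that $\gamma\in G$ generates an infinite cyclic subgroup $\langle\gamma\rangle\cong\mathbb{Z}$ of $G$. Let $S_0 = S\times\{t_0\}$ be a horizontal section for some $t_0\in\mathbb{R}$, and suppose there is a positive integer $n_0$ such that $\gamma^n S_0\cap S_0=\emptyset$ for all $n>n_0$. Then the quotient $M/G$ is compact.
   Context: An action by covering transformations means a free, properly discontinuous action, i.e. every point has a neighborhood $\mathcal{U}$ with $g\mathcal{U}\cap\mathcal{U}=\emptyset$ for all $g\neq 1$. *)

theory Defs
  imports "HOL-Analysis.Analysis" "HOL-Homology.Homology"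
    "HOL-Algebra.Group_Action" "HOL-Algebra.Generated_Groups"
begin

definition half_space :: "nat \<Rightarrow> (nat \<Rightarrow> real) topology" where
  "half_space n = subtopology (Euclidean_space n) {y. 0 \<le> y 0}"

definition manifold_with_boundary :: "nat \<Rightarrow> 'a topology \<Rightarrow> bool" where
  "manifold_with_boundary n X \<longleftrightarrow>
     Hausdorff_space X \<and> second_countable X \<and>
     (\<forall>x\<in>topspace X. \<exists>U V. openin X U \<and> x \<in> U \<and> openin (half_space n) V \<and>
        subtopology X U homeomorphic_space subtopology (half_space n) V)"

definition manifold_interior :: "nat \<Rightarrow> 'a topology \<Rightarrow> 'a set" where
  "manifold_interior n X =
     {x \<in> topspace X. \<exists>U V. openin X U \<and> x \<in> U \<and> openin (Euclidean_space n) V \<and>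
        subtopology X U homeomorphic_space subtopology (Euclidean_space n) V}"

text \<open>Orientability (integral singular homology): a locally consistent choice of
  generators of the local homology groups H_n(X, X - x) at the interior points.\<close>
definition orientable_manifold :: "nat \<Rightarrow> 'a topology \<Rightarrow> bool" where
  "orientable_manifold n X \<longleftrightarrow>
     (\<exists>or. (\<forall>x\<in>manifold_interior n X.
              or x \<in> carrier (relative_homology_group (int n) X (topspace X - {x})) \<and>
              generate (relative_homology_group (int n) X (topspace X - {x})) {or x}
                = carrier (relative_homology_group (int n) X (topspace X - {x}))) \<and>
           (\<forall>x\<in>manifold_interior n X. \<exists>K. compactin X K \<and> K \<subseteq> manifold_interior n X \<and>
              x \<in> X interior_of K \<and>
              (\<exists>c \<in> carrier (relative_homology_group (int n) X (topspace X - K)).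
                 \<forall>y\<in>K. hom_induced (int n) X (topspace X - K) X (topspace X - {y}) id c = or y)))"

definition covering_action :: "('g, 'm) monoid_scheme \<Rightarrow> 'b topology \<Rightarrow> ('g \<Rightarrow> 'b \<Rightarrow> 'b) \<Rightarrow> bool" where
  "covering_action G X \<phi> \<longleftrightarrow>
     group_action G (topspace X) \<phi> \<and>
     (\<forall>x\<in>topspace X. \<exists>U. openin X U \<and> x \<in> U \<and>
        (\<forall>g\<in>carrier G. g \<noteq> \<one>\<^bsub>G\<^esub> \<longrightarrow> \<phi> g ` U \<inter> U = {}))"

end

theory Submission
  imports Defs
begin

lemma hm_facts:
  assumes "homeomorphic_maps X X f g"
  shows "f ` topspace X = topspace X" "inj_on f (topspace X)" "homeomorphic_map X X f"
    "\<And>x. x \<in> topspace X \<Longrightarrow> g (f x) = x" "\<And>x. x \<in> topspace X \<Longrightarrow> f (g x) = x"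
    "\<And>x. x \<in> topspace X \<Longrightarrow> f x \<in> topspace X"
proof -
  have c1: "continuous_map X X f" and c2: "continuous_map X X g"
    and e1: "\<And>x. x \<in> topspace X \<Longrightarrow> g (f x) = x" and e2: "\<And>x. x \<in> topspace X \<Longrightarrow> f (g x) = x"
    using assms unfolding homeomorphic_maps_def by blast+
  have i1: "\<And>x. x \<in> topspace X \<Longrightarrow> f x \<in> topspace X" using c1 unfolding continuous_map_def by blast
  have i2: "\<And>x. x \<in> topspace X \<Longrightarrow> g x \<in> topspace X" using c2 unfolding continuous_map_def by blast
  show "f ` topspace X = topspace X"
  proof
    show "f ` topspace X \<subseteq> topspace X" using i1 by blast
    show "topspace X \<subseteq> f ` topspace X"
    proof
      fix x assume "x \<in> topspace X"
      then have "x = f (g x)" "g x \<in> topspace X" using e2 i2 by auto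
      then show "x \<in> f ` topspace X" by blast
    qed
  qed
  show "inj_on f (topspace X)" by (rule inj_onI) (metis e1)
  show "homeomorphic_map X X f" using assms homeomorphic_map_maps by blast
  show "\<And>x. x \<in> topspace X \<Longrightarrow> g (f x) = x" by (rule e1)
  show "\<And>x. x \<in> topspace X \<Longrightarrow> f (g x) = x" by (rule e2)
  show "\<And>x. x \<in> topspace X \<Longrightarrow> f x \<in> topspace X" by (rule i1)
qed

lemma sep_lemma:
  fixes S :: "'a topology"
  assumes hm: "homeomorphic_maps (prod_topology S euclideanreal) (prod_topology S euclideanreal) f g"
    and C: "connectedin (prod_topology S euclideanreal) C"
    and dis: "C \<inter> f ` (topspace S \<times> {a}) = {}"
  shows "C \<subseteq> f ` (topspace S \<times> {..<a}) \<or> C \<subseteq> f ` (topspace S \<times> {a<..})"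
proof -
  let ?T = "prod_topology S euclideanreal"
  note F = hm_facts[OF hm]
  have o1: "openin ?T (f ` (topspace S \<times> {..<a}))"
    by (subst homeomorphic_map_openness[OF F(3)]) (auto simp: openin_prod_Times_iff)
  have o2: "openin ?T (f ` (topspace S \<times> {a<..}))"
    by (subst homeomorphic_map_openness[OF F(3)]) (auto simp: openin_prod_Times_iff)
  have d: "disjnt (f ` (topspace S \<times> {..<a})) (f ` (topspace S \<times> {a<..}))"
    using F(2) unfolding disjnt_def inj_on_def by fastforce
  have "C \<subseteq> topspace ?T" using C connectedin_subset_topspace by blast
  also have "\<dots> = f ` topspace ?T" using F(1) by simp
  also have "\<dots> = f ` (topspace S \<times> {..<a}) \<union> f ` (topspace S \<times> {a}) \<union> f ` (topspace S \<times> {a<..})"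
    unfolding image_Un[symmetric] by (rule arg_cong[where f="(`) f"]) auto
  finally have "C \<subseteq> f ` (topspace S \<times> {..<a}) \<union> f ` (topspace S \<times> {a<..})" using dis by blast
  then show ?thesis
    using connectedin_subset_separated_union[OF C] separatedin_open_sets[OF o1 o2] d by blast
qed


lemma height_bound:
  assumes "compactin (prod_topology S euclideanreal) K"
  shows "\<exists>B. \<forall>y\<in>K. \<bar>snd y\<bar> \<le> B"
proof -
  have "compactin euclideanreal (snd ` K)"
    by (rule image_compactin[OF assms continuous_map_snd])
  then have "bounded (snd ` K)" using compact_imp_bounded by simp
  then show ?thesis unfolding bounded_real by blast
qed

lemma slab_compact:
  assumes "compact_space S"
  shows "compactin (prod_topology S euclideanreal) (topspace S \<times> {c..d})"
  using assms by (simp add: compactin_Times compact_space_def)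

lemma level_bounds:
  assumes hm: "homeomorphic_maps (prod_topology S euclideanreal) (prod_topology S euclideanreal) f g"
    and cS: "compact_space S"
  shows "\<exists>c d. f ` (topspace S \<times> {a}) \<subseteq> topspace S \<times> {c..d}"
proof -
  note F = hm_facts[OF hm]
  have cf: "continuous_map (prod_topology S euclideanreal) (prod_topology S euclideanreal) f"
    using hm unfolding homeomorphic_maps_def by blast
  have "compactin (prod_topology S euclideanreal) (f ` (topspace S \<times> {a}))"
    by (rule image_compactin[OF _ cf]) (use slab_compact[OF cS, of a a] in simp)
  then obtain B where B: "\<forall>y\<in>f ` (topspace S \<times> {a}). \<bar>snd y\<bar> \<le> B"
    using height_bound by blast
  have "f ` (topspace S \<times> {a}) \<subseteq> topspace S \<times> {-B..B}"
  proof
    fix y assume y: "y \<in> f ` (topspace S \<times> {a})"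
    then have "y \<in> topspace (prod_topology S euclideanreal)" using F(6) by auto
    then have "fst y \<in> topspace S" by (simp add: mem_Times_iff)
    moreover have "\<bar>snd y\<bar> \<le> B" using B y by blast
    ultimately show "y \<in> topspace S \<times> {-B..B}" by (simp add: mem_Times_iff abs_le_iff)
  qed
  then show ?thesis by blast
qed

lemma image_in_slab_bounded:
  assumes hm: "homeomorphic_maps (prod_topology S euclideanreal) (prod_topology S euclideanreal) f g"
    and cS: "compact_space S"
    and W: "W \<subseteq> topspace (prod_topology S euclideanreal)"
    and sub: "f ` W \<subseteq> topspace S \<times> {c..d}"
  shows "\<exists>B. \<forall>y\<in>W. \<bar>snd y\<bar> \<le> B"
proof -
  note F = hm_facts[OF hm]
  have cg: "continuous_map (prod_topology S euclideanreal) (prod_topology S euclideanreal) g"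
    using hm unfolding homeomorphic_maps_def by blast
  have k: "compactin (prod_topology S euclideanreal) (g ` (topspace S \<times> {c..d}))"
    by (rule image_compactin[OF slab_compact[OF cS] cg])
  have "W \<subseteq> g ` (topspace S \<times> {c..d})"
  proof
    fix w assume "w \<in> W"
    then have "w = g (f w)" "f w \<in> topspace S \<times> {c..d}" using F(4) W sub by auto
    then show "w \<in> g ` (topspace S \<times> {c..d})" by (metis image_eqI)
  qed
  then show ?thesis using height_bound[OF k] by blast
qed


lemma conn_strip:
  assumes "connected_space S" "connected I"
  shows "connectedin (prod_topology S euclideanreal) (topspace S \<times> I)"
  using assms by (simp add: connectedin_Times connectedin_topspace)

lemma unbounded_R:
  assumes ne: "topspace S \<noteq> {}" and B: "\<forall>y\<in>topspace S \<times> {a<..}. \<bar>snd y\<bar> \<le> (B::real)"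
  shows False
proof -
  obtain x where x: "x \<in> topspace S" using ne by blast
  have "(x, \<bar>a\<bar> + \<bar>B\<bar> + 1) \<in> topspace S \<times> {a<..}" using x by auto
  from bspec[OF B this] have "\<bar>\<bar>a\<bar> + \<bar>B\<bar> + 1\<bar> \<le> B" by simp
  then show False by linarith
qed

lemma unbounded_L:
  assumes ne: "topspace S \<noteq> {}" and B: "\<forall>y\<in>topspace S \<times> {..<a}. \<bar>snd y\<bar> \<le> (B::real)"
  shows False
proof -
  obtain x where x: "x \<in> topspace S" using ne by blast
  have "(x, - \<bar>a\<bar> - \<bar>B\<bar> - 1) \<in> topspace S \<times> {..<a}" using x by auto
  from bspec[OF B this] have "\<bar>- \<bar>a\<bar> - \<bar>B\<bar> - 1\<bar> \<le> B" by simp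
  then show False by linarith
qed

lemma ends_lemma:
  assumes hm: "homeomorphic_maps (prod_topology S euclideanreal) (prod_topology S euclideanreal) f g"
    and cS: "compact_space S" and conS: "connected_space S" and ne: "topspace S \<noteq> {}"
    and sl: "f ` (topspace S \<times> {a}) \<subseteq> topspace S \<times> {c..d}"
  shows "(topspace S \<times> {..<c} \<subseteq> f ` (topspace S \<times> {..<a}) \<and> topspace S \<times> {d<..} \<subseteq> f ` (topspace S \<times> {a<..}))
       \<or> (topspace S \<times> {..<c} \<subseteq> f ` (topspace S \<times> {a<..}) \<and> topspace S \<times> {d<..} \<subseteq> f ` (topspace S \<times> {..<a}))"
proof -
  let ?T = "prod_topology S euclideanreal"
  let ?P = "f ` (topspace S \<times> {..<a})" and ?Q = "f ` (topspace S \<times> {a<..})"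
  let ?Lc = "topspace S \<times> {..<c}" and ?Rd = "topspace S \<times> {d<..}"
  note F = hm_facts[OF hm]
  have dPQ: "?P \<inter> ?Q = {}"
    using F(2) unfolding inj_on_def by fastforce
  have dPa: "?P \<inter> f ` (topspace S \<times> {a}) = {}"
    using F(2) unfolding inj_on_def by fastforce
  have dQa: "?Q \<inter> f ` (topspace S \<times> {a}) = {}"
    using F(2) unfolding inj_on_def by fastforce
  have cover: "topspace ?T = ?P \<union> f ` (topspace S \<times> {a}) \<union> ?Q"
  proof -
    have "topspace ?T = f ` topspace ?T" using F(1) by simp
    also have "\<dots> = ?P \<union> f ` (topspace S \<times> {a}) \<union> ?Q"
      unfolding image_Un[symmetric] by (rule arg_cong[where f="(`) f"]) auto
    finally show ?thesis .
  qed
  have Lc: "?Lc \<subseteq> ?P \<or> ?Lc \<subseteq> ?Q"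
    by (rule sep_lemma[OF hm conn_strip[OF conS]]) (use sl in auto)
  have Rd: "?Rd \<subseteq> ?P \<or> ?Rd \<subseteq> ?Q"
    by (rule sep_lemma[OF hm conn_strip[OF conS]]) (use sl in auto)
  have notboth: False if A: "?Lc \<subseteq> W" "?Rd \<subseteq> W" and WW: "W \<inter> W' = {}" "W' \<inter> f ` (topspace S \<times> {a}) = {}"
     and WW': "W' = f ` V" "V \<subseteq> topspace ?T"
     and unb: "\<And>B. \<forall>y\<in>V. \<bar>snd y\<bar> \<le> B \<Longrightarrow> False" for W W' V
  proof -
    have "f ` V \<subseteq> topspace S \<times> {c..d}"
    proof
      fix y assume y: "y \<in> f ` V"
      then have yT: "y \<in> topspace ?T" using WW'(2) F(6) by blast
      have "y \<notin> W" using y WW WW' by blast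
      then have "y \<notin> ?Lc" "y \<notin> ?Rd" using A by blast+
      then show "y \<in> topspace S \<times> {c..d}" using yT by (auto simp: mem_Times_iff)
    qed
    then obtain B where "\<forall>y\<in>V. \<bar>snd y\<bar> \<le> B"
      using image_in_slab_bounded[OF hm cS WW'(2)] by blast
    then show False by (rule unb)
  qed
  have VL: "topspace S \<times> {..<a} \<subseteq> topspace ?T" and VR: "topspace S \<times> {a<..} \<subseteq> topspace ?T" by auto
  show ?thesis
  proof (cases "?Lc \<subseteq> ?P")
    case True
    show ?thesis
    proof (cases "?Rd \<subseteq> ?P")
      case True2: True
      have False
        by (rule notboth[OF True True2 dPQ dQa refl VR])
           (erule unbounded_R[OF ne])
      then show ?thesis ..
    next
      case False
      then show ?thesis using True Rd by blast
    qed
  next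
    case False
    then have LQ: "?Lc \<subseteq> ?Q" using Lc by blast
    show ?thesis
    proof (cases "?Rd \<subseteq> ?Q")
      case True2: True
      have dQP: "?Q \<inter> ?P = {}" using dPQ by blast
      have False
        by (rule notboth[OF LQ True2 dQP dPa refl VL])
           (erule unbounded_L[OF ne])
      then show ?thesis ..
    next
      case False
      then show ?thesis using LQ Rd by blast
    qed
  qed
qed


locale fam =
  fixes S :: "'a topology" and F :: "int \<Rightarrow> 'a \<times> real \<Rightarrow> 'a \<times> real" and t0 :: real
  assumes cS: "compact_space S" and conS: "connected_space S" and ne: "topspace S \<noteq> {}"
    and hmF: "\<And>k. homeomorphic_maps (prod_topology S euclideanreal) (prod_topology S euclideanreal) (F k) (F (-k))"
    and Fadd: "\<And>j k x. x \<in> topspace (prod_topology S euclideanreal) \<Longrightarrow> F (j+k) x = F j (F k x)"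
begin

abbreviation "TT \<equiv> prod_topology S euclideanreal"
abbreviation "LE \<equiv> topspace S \<times> {..t0}"
abbreviation "UU \<equiv> topspace S \<times> {..<t0}"
abbreviation "VV \<equiv> topspace S \<times> {t0<..}"
abbreviation "S0 \<equiv> topspace S \<times> {t0}"

lemma topT: "topspace TT = topspace S \<times> UNIV" by simp

lemma F0: "x \<in> topspace TT \<Longrightarrow> F 0 x = x"
proof -
  assume x: "x \<in> topspace TT"
  have "F 0 (F 0 x) = x" using hm_facts(4)[OF hmF[of 0]] x by simp
  moreover have "F 0 (F 0 x) = F 0 x" using Fadd[OF x, of 0 0] by simp
  ultimately show ?thesis by simp
qed

lemma Fin: "x \<in> topspace TT \<Longrightarrow> F k x \<in> topspace TT"
  using hm_facts(6)[OF hmF[of k]] by blast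

lemma img_comp: "A \<subseteq> topspace TT \<Longrightarrow> F j ` (F k ` A) = F (j+k) ` A"
proof -
  assume A: "A \<subseteq> topspace TT"
  have "F j ` (F k ` A) = (\<lambda>x. F j (F k x)) ` A" by (simp add: image_image)
  also have "\<dots> = F (j+k) ` A"
    by (rule image_cong[OF refl]) (metis A Fadd subsetD)
  finally show ?thesis .
qed

lemma img_F0: "A \<subseteq> topspace TT \<Longrightarrow> F 0 ` A = A"
proof -
  assume A: "A \<subseteq> topspace TT"
  have "F 0 ` A = (\<lambda>x. x) ` A" by (rule image_cong[OF refl]) (metis A F0 subsetD)
  then show ?thesis by simp
qed

lemma img_disj: "A \<subseteq> topspace TT \<Longrightarrow> B \<subseteq> topspace TT \<Longrightarrow> A \<inter> B = {} \<Longrightarrow> F k ` A \<inter> F k ` B = {}"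
proof -
  assume "A \<subseteq> topspace TT" "B \<subseteq> topspace TT" "A \<inter> B = {}"
  moreover have "inj_on (F k) (topspace TT)" using hm_facts(2)[OF hmF[of k]] .
  ultimately show ?thesis by (metis inj_on_image_Int image_empty)
qed

lemma img_compl: "A \<subseteq> topspace TT \<Longrightarrow> topspace TT - F k ` A = F k ` (topspace TT - A)"
proof -
  assume A: "A \<subseteq> topspace TT"
  have i: "inj_on (F k) (topspace TT)" using hm_facts(2)[OF hmF[of k]] .
  have s: "F k ` topspace TT = topspace TT" using hm_facts(1)[OF hmF[of k]] .
  show ?thesis using inj_on_image_set_diff[OF i _ A] s by simp
qed

lemma x0: obtains x0 where "x0 \<in> topspace S" using ne by blast


lemma UU_T': "UU \<subseteq> topspace TT" by auto
lemma VV_T': "VV \<subseteq> topspace TT" by auto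
lemma LE_T': "LE \<subseteq> topspace TT" by auto
lemma S0_T': "S0 \<subseteq> topspace TT" by auto

lemma caseA:
  assumes dis: "F k ` S0 \<inter> S0 = {}"
    and cd: "F k ` S0 \<subseteq> topspace S \<times> {c..d}"
    and Lc: "topspace S \<times> {..<c} \<subseteq> F k ` UU"
  shows "LE \<subseteq> F k ` UU \<or> LE \<subseteq> F (-k) ` UU"
proof -
  obtain x0 where x0: "x0 \<in> topspace S" using ne by blast
  have cont: "continuous_map TT TT (F k)" using hmF[of k] unfolding homeomorphic_maps_def by blast
  have cC: "connectedin TT (F k ` S0)"
    by (rule connectedin_continuous_map_image[OF cont]) (rule conn_strip[OF conS], simp)
  have d0: "F k ` S0 \<inter> F 0 ` S0 = {}" using dis img_F0[OF S0_T'] by simp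
  have side0: "F k ` S0 \<subseteq> F 0 ` UU \<or> F k ` S0 \<subseteq> F 0 ` VV"
    using sep_lemma[OF hmF[of 0] cC d0] by simp
  have side: "F k ` S0 \<subseteq> UU \<or> F k ` S0 \<subseteq> VV"
    using side0 img_F0[OF UU_T'] img_F0[OF VV_T'] by simp
  have dUV: "F k ` UU \<inter> F k ` VV = {}" by (rule img_disj[OF UU_T' VV_T']) auto
  show ?thesis
  proof (cases "F k ` S0 \<subseteq> VV")
    case True
    have cL: "connectedin TT LE" by (rule conn_strip[OF conS]) simp
    have dL: "LE \<inter> F k ` S0 = {}" using True by auto
    have sL: "LE \<subseteq> F k ` UU \<or> LE \<subseteq> F k ` VV" using sep_lemma[OF hmF[of k] cL dL] .
    have z1: "(x0, min c t0 - 1) \<in> LE" "(x0, min c t0 - 1) \<in> topspace S \<times> {..<c}" using x0 by auto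
    have z2: "(x0, min c t0 - 1) \<in> F k ` UU" by (rule subsetD[OF Lc z1(2)])
    have "\<not> LE \<subseteq> F k ` VV"
    proof
      assume "LE \<subseteq> F k ` VV"
      then have "(x0, min c t0 - 1) \<in> F k ` VV" using z1(1) by (rule subsetD)
      then show False using z2 dUV by (metis IntI empty_iff)
    qed
    then show ?thesis using sL by blast
  next
    case False
    then have SU: "F k ` S0 \<subseteq> UU" using side by blast
    note E = ends_lemma[OF hmF[of k] cS conS ne cd]
    have z1: "(x0, min c t0 - 1) \<in> topspace S \<times> {..<c}" using x0 by auto
    have z2: "(x0, min c t0 - 1) \<in> F k ` UU" by (rule subsetD[OF Lc z1])
    have Rd: "topspace S \<times> {d<..} \<subseteq> F k ` VV"
    proof (rule ccontr)
      assume "\<not> topspace S \<times> {d<..} \<subseteq> F k ` VV"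
      then have "topspace S \<times> {..<c} \<subseteq> F k ` VV" using E by blast
      then have "(x0, min c t0 - 1) \<in> F k ` VV" using z1 by (rule subsetD)
      then show False using z2 dUV by (metis IntI empty_iff)
    qed
    have cH: "connectedin TT (topspace S \<times> {t0..})" by (rule conn_strip[OF conS]) simp
    have dH: "topspace S \<times> {t0..} \<inter> F k ` S0 = {}" using SU by auto
    have sH: "topspace S \<times> {t0..} \<subseteq> F k ` UU \<or> topspace S \<times> {t0..} \<subseteq> F k ` VV"
      using sep_lemma[OF hmF[of k] cH dH] .
    have w1: "(x0, max d t0 + 1) \<in> topspace S \<times> {t0..}" "(x0, max d t0 + 1) \<in> topspace S \<times> {d<..}"
      using x0 by auto
    have w2: "(x0, max d t0 + 1) \<in> F k ` VV" by (rule subsetD[OF Rd w1(2)])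
    have HV: "topspace S \<times> {t0..} \<subseteq> F k ` VV"
    proof (rule ccontr)
      assume "\<not> topspace S \<times> {t0..} \<subseteq> F k ` VV"
      then have "topspace S \<times> {t0..} \<subseteq> F k ` UU" using sH by blast
      then have "(x0, max d t0 + 1) \<in> F k ` UU" using w1(1) by (rule subsetD)
      then show False using w2 dUV by (metis IntI empty_iff)
    qed
    have "LE \<subseteq> F (-k) ` UU"
    proof
      fix y assume y: "y \<in> LE"
      have yT: "y \<in> topspace TT" using y LE_T' by blast
      have bk: "F (-k) (F k y) = y" by (rule hm_facts(4)[OF hmF[of k] yT])
      have fyT: "F k y \<in> topspace TT" by (rule Fin[OF yT])
      have "F k y \<in> UU"
      proof (rule ccontr)
        assume nU: "F k y \<notin> UU"
        have "F k y \<in> topspace S \<times> {t0..}" using fyT nU by (auto simp: mem_Times_iff)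
        then have "F k y \<in> F k ` VV" by (rule subsetD[OF HV])
        then obtain v where v: "v \<in> VV" "F k y = F k v" by blast
        have vT: "v \<in> topspace TT" using v(1) VV_T' by blast
        have "y = v" using inj_onD[OF hm_facts(2)[OF hmF[of k]] v(2) yT vT] .
        then show False using y v(1) by auto
      qed
      then show "y \<in> F (-k) ` UU" using bk by (metis image_eqI)
    qed
    then show ?thesis by blast
  qed
qed


lemma swap_case:
  assumes cd: "F k ` S0 \<subseteq> topspace S \<times> {c..d}"
    and Lc: "topspace S \<times> {..<c} \<subseteq> F k ` VV" and Rd: "topspace S \<times> {d<..} \<subseteq> F k ` UU"
  shows "\<exists>c'. topspace S \<times> {..<c'} \<subseteq> F (k + k) ` UU"
proof -
  obtain x0 where x0: "x0 \<in> topspace S" using ne by blast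
  define a where "a = max d t0 + 1"
  obtain c' d' where cd': "F k ` (topspace S \<times> {a}) \<subseteq> topspace S \<times> {c'..d'}"
    using level_bounds[OF hmF[of k] cS, of a] by blast
  note E = ends_lemma[OF hmF[of k] cS conS ne cd']
  have aV: "topspace S \<times> {a<..} \<subseteq> VV" unfolding a_def by auto
  have aR: "topspace S \<times> {a<..} \<subseteq> topspace S \<times> {d<..}" unfolding a_def by auto
  have dUV: "F k ` UU \<inter> F k ` VV = {}" by (rule img_disj[OF UU_T' VV_T']) auto
  have "\<not> topspace S \<times> {d'<..} \<subseteq> F k ` (topspace S \<times> {a<..})"
  proof
    assume "topspace S \<times> {d'<..} \<subseteq> F k ` (topspace S \<times> {a<..})"
    also have "\<dots> \<subseteq> F k ` VV" by (rule image_mono[OF aV])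
    finally have R1: "topspace S \<times> {d'<..} \<subseteq> F k ` VV" .
    have z: "(x0, max d d' + 1) \<in> topspace S \<times> {d'<..}" "(x0, max d d' + 1) \<in> topspace S \<times> {d<..}"
      using x0 by auto
    have "(x0, max d d' + 1) \<in> F k ` VV" by (rule subsetD[OF R1 z(1)])
    moreover have "(x0, max d d' + 1) \<in> F k ` UU" by (rule subsetD[OF Rd z(2)])
    ultimately show False using dUV by (metis IntI empty_iff)
  qed
  then have L1: "topspace S \<times> {..<c'} \<subseteq> F k ` (topspace S \<times> {a<..})" using E by blast
  also have "\<dots> \<subseteq> F k ` (topspace S \<times> {d<..})" by (rule image_mono[OF aR])
  also have "\<dots> \<subseteq> F k ` (F k ` UU)" by (rule image_mono[OF Rd])
  also have "\<dots> = F (k + k) ` UU" by (rule img_comp[OF UU_T'])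
  finally show ?thesis by blast
qed

lemma lower_end:
  assumes cd: "F k ` S0 \<subseteq> topspace S \<times> {c..d}"
    and L': "topspace S \<times> {..<c'} \<subseteq> F k ` UU"
  shows "topspace S \<times> {..<c} \<subseteq> F k ` UU"
proof -
  obtain x0 where x0: "x0 \<in> topspace S" using ne by blast
  have cL: "connectedin TT (topspace S \<times> {..<c})" by (rule conn_strip[OF conS]) simp
  have dL: "topspace S \<times> {..<c} \<inter> F k ` S0 = {}" using cd by auto
  have sL: "topspace S \<times> {..<c} \<subseteq> F k ` UU \<or> topspace S \<times> {..<c} \<subseteq> F k ` VV"
    using sep_lemma[OF hmF[of k] cL dL] .
  have dUV: "F k ` UU \<inter> F k ` VV = {}" by (rule img_disj[OF UU_T' VV_T']) auto
  have z: "(x0, min c c' - 1) \<in> topspace S \<times> {..<c}" "(x0, min c c' - 1) \<in> topspace S \<times> {..<c'}"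
    using x0 by auto
  have zU: "(x0, min c c' - 1) \<in> F k ` UU" by (rule subsetD[OF L' z(2)])
  have "\<not> topspace S \<times> {..<c} \<subseteq> F k ` VV"
  proof
    assume "topspace S \<times> {..<c} \<subseteq> F k ` VV"
    then have "(x0, min c c' - 1) \<in> F k ` VV" using z(1) by (rule subsetD)
    then show False using zU dUV by (metis IntI empty_iff)
  qed
  then show ?thesis using sL by blast
qed

lemma choose_dir:
  assumes d1: "F N ` S0 \<inter> S0 = {}" and d2: "F (N + N) ` S0 \<inter> S0 = {}"
  shows "\<exists>K0 \<in> {N, -N, N + N, -(N + N)}. LE \<subseteq> F K0 ` UU"
proof -
  obtain c d where cd: "F N ` S0 \<subseteq> topspace S \<times> {c..d}"
    using level_bounds[OF hmF[of N] cS, of t0] by blast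
  note E = ends_lemma[OF hmF[of N] cS conS ne cd]
  show ?thesis
  proof (cases "topspace S \<times> {..<c} \<subseteq> F N ` UU")
    case True
    then have "LE \<subseteq> F N ` UU \<or> LE \<subseteq> F (-N) ` UU" by (rule caseA[OF d1 cd])
    then show ?thesis by blast
  next
    case False
    then have sw: "topspace S \<times> {..<c} \<subseteq> F N ` VV" "topspace S \<times> {d<..} \<subseteq> F N ` UU"
      using E by blast+
    obtain c' where c': "topspace S \<times> {..<c'} \<subseteq> F (N + N) ` UU"
      using swap_case[OF cd sw] by blast
    obtain c2 d2 where cd2: "F (N + N) ` S0 \<subseteq> topspace S \<times> {c2..d2}"
      using level_bounds[OF hmF[of "N + N"] cS, of t0] by blast
    have "topspace S \<times> {..<c2} \<subseteq> F (N + N) ` UU" by (rule lower_end[OF cd2 c'])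
    then have "LE \<subseteq> F (N + N) ` UU \<or> LE \<subseteq> F (-(N + N)) ` UU" by (rule caseA[OF d2 cd2])
    then show ?thesis by blast
  qed
qed

end


locale fam_up = fam +
  assumes up: "topspace S \<times> {..t0} \<subseteq> F 1 ` (topspace S \<times> {..<t0})"
    and properF: "\<And>K. compactin (prod_topology S euclideanreal) K \<Longrightarrow>
                  \<exists>B. \<forall>k. \<bar>k\<bar> > B \<longrightarrow> F k ` (topspace S \<times> {t0}) \<inter> K = {}"
begin

lemma LE_T: "LE \<subseteq> topspace TT" by auto
lemma UU_T: "UU \<subseteq> topspace TT" by auto
lemma VV_T: "VV \<subseteq> topspace TT" by auto
lemma S0_T: "S0 \<subseteq> topspace TT" by auto

lemma Wstep: "F k ` LE \<subseteq> F (k+1) ` UU"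
proof -
  have "F k ` LE \<subseteq> F k ` (F 1 ` UU)" using up by (rule image_mono)
  also have "\<dots> = F (k+1) ` UU" using img_comp[OF UU_T] by simp
  finally show ?thesis .
qed

lemma Wsuc: "F k ` LE \<subseteq> F (k+1) ` LE"
proof -
  have "F (k+1) ` UU \<subseteq> F (k+1) ` LE" by (rule image_mono) auto
  then show ?thesis using Wstep by blast
qed

lemma Wmono_nat: "F j ` LE \<subseteq> F (j + int n) ` LE"
proof (induction n)
  case 0 then show ?case by simp
next
  case (Suc n)
  have e: "j + int (Suc n) = j + int n + 1" by simp
  show ?case unfolding e using Suc.IH Wsuc[of "j + int n"] by (rule subset_trans)
qed

lemma Wmono: "j \<le> k \<Longrightarrow> F j ` LE \<subseteq> F k ` LE"
  using Wmono_nat[of j "nat (k - j)"] by simp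

lemma W0: "F 0 ` LE = LE" using img_F0[OF LE_T] .

lemma Wneg: "F (-1) ` LE \<subseteq> UU"
  using Wstep[of "-1"] img_F0[OF UU_T] by simp

lemma hmk: "homeomorphic_maps TT TT (F k) (F (-k))" by (rule hmF)

lemma exists_up:
  assumes p: "p \<in> topspace TT"
  shows "\<exists>k. p \<in> F k ` LE"
proof -
  define R where "R = max (snd p) t0"
  obtain B where B: "\<forall>k. \<bar>k\<bar> > B \<longrightarrow> F k ` S0 \<inter> topspace S \<times> {t0..R} = {}"
    using properF[OF slab_compact[OF cS, of t0 R]] by blast
  define m where "m = \<bar>B\<bar> + 1"
  have m1: "m \<ge> 1" unfolding m_def by simp
  have d1: "F m ` S0 \<inter> topspace S \<times> {t0..R} = {}"
  proof -
    have "\<bar>m\<bar> > B" unfolding m_def by simp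
    then show ?thesis by (rule B[rule_format])
  qed
  have LEsub: "LE \<subseteq> F m ` UU"
  proof -
    have "LE = F 0 ` LE" by (rule W0[symmetric])
    also have "\<dots> \<subseteq> F (m - 1) ` LE" by (rule Wmono) (use m1 in simp)
    also have "\<dots> \<subseteq> F (m - 1 + 1) ` UU" by (rule Wstep)
    finally show ?thesis by (simp only: diff_add_cancel)
  qed
  have d2: "F m ` S0 \<inter> F m ` UU = {}" by (rule img_disj[OF S0_T UU_T]) auto
  define C where "C = topspace S \<times> {..R}"
  have Cd: "C \<inter> F m ` S0 = {}"
  proof -
    have CC: "C \<subseteq> LE \<union> topspace S \<times> {t0..R}" unfolding C_def by auto
    show ?thesis
    proof (rule equals0I)
      fix y assume y: "y \<in> C \<inter> F m ` S0"
      then have y1: "y \<in> F m ` S0" by (rule IntD2)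
      have "y \<in> LE \<or> y \<in> topspace S \<times> {t0..R}" using CC y by blast
      then show False
      proof
        assume "y \<in> LE"
        then have "y \<in> F m ` UU" by (rule subsetD[OF LEsub])
        then show False using y1 d2 by (metis IntI empty_iff)
      next
        assume "y \<in> topspace S \<times> {t0..R}"
        then show False using y1 d1 by (metis IntI empty_iff)
      qed
    qed
  qed
  have Cc: "connectedin TT C" unfolding C_def by (rule conn_strip[OF conS]) simp
  have side: "C \<subseteq> F m ` UU \<or> C \<subseteq> F m ` VV"
    by (rule sep_lemma[OF hmk Cc Cd])
  obtain x0 where x0: "x0 \<in> topspace S" using ne by blast
  have z: "(x0, t0 - 1) \<in> C" "(x0, t0 - 1) \<in> UU" using x0 unfolding C_def R_def by auto
  have dUV: "F m ` UU \<inter> F m ` VV = {}" by (rule img_disj[OF UU_T VV_T]) auto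
  have "C \<subseteq> F m ` UU"
  proof (rule ccontr)
    assume "\<not> C \<subseteq> F m ` UU"
    then have "C \<subseteq> F m ` VV" using side by blast
    moreover have "(x0, t0 - 1) \<in> F m ` UU"
      by (rule subsetD[OF LEsub]) (use z(2) in auto)
    ultimately show False using z(1) dUV by blast
  qed
  moreover have "p \<in> C" using p unfolding C_def R_def by (auto simp: mem_Times_iff)
  moreover have "F m ` UU \<subseteq> F m ` LE" by (rule image_mono) auto
  ultimately have "p \<in> F m ` LE" by blast
  then show ?thesis by blast
qed

lemma exists_down:
  assumes p: "p \<in> topspace TT"
  shows "\<exists>k. p \<notin> F k ` LE"
proof -
  define R where "R = min (snd p) t0"
  obtain B where B: "\<forall>k. \<bar>k\<bar> > B \<longrightarrow> F k ` S0 \<inter> topspace S \<times> {R..t0} = {}"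
    using properF[OF slab_compact[OF cS, of R t0]] by blast
  define m where "m = \<bar>B\<bar> + 1"
  have m1: "m \<ge> 1" unfolding m_def by simp
  have d1: "F (-m) ` S0 \<inter> topspace S \<times> {R..t0} = {}"
  proof -
    have "\<bar>-m\<bar> > B" unfolding m_def by simp
    then show ?thesis by (rule B[rule_format])
  qed
  have WU: "F (-m) ` LE \<subseteq> UU"
  proof -
    have "F (-m) ` LE \<subseteq> F (-1) ` LE" by (rule Wmono) (use m1 in simp)
    then show ?thesis using Wneg by (rule subset_trans)
  qed
  have S0sub: "F (-m) ` S0 \<subseteq> UU"
  proof -
    have "F (-m) ` S0 \<subseteq> F (-m) ` LE" by (rule image_mono) auto
    then show ?thesis using WU by (rule subset_trans)
  qed
  define C where "C = topspace S \<times> {R..}"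
  have Cd: "C \<inter> F (-m) ` S0 = {}"
  proof (rule equals0I)
    fix y assume y: "y \<in> C \<inter> F (-m) ` S0"
    then have y1: "y \<in> F (-m) ` S0" by (rule IntD2)
    have yC: "y \<in> C" using y by (rule IntD1)
    have yU: "y \<in> UU" by (rule subsetD[OF S0sub y1])
    then have "y \<in> topspace S \<times> {R..t0}" using yC unfolding C_def by (auto simp: mem_Times_iff)
    then show False using y1 d1 by (metis IntI empty_iff)
  qed
  have Cc: "connectedin TT C" unfolding C_def by (rule conn_strip[OF conS]) simp
  have side: "C \<subseteq> F (-m) ` UU \<or> C \<subseteq> F (-m) ` VV"
    using sep_lemma[OF hmF[of "-m"] Cc Cd] .
  obtain x0 where x0: "x0 \<in> topspace S" using ne by blast
  have z: "(x0, t0 + 1) \<in> C" "(x0, t0 + 1) \<in> VV" using x0 unfolding C_def R_def by auto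
  have dUV: "F (-m) ` UU \<inter> F (-m) ` VV = {}" by (rule img_disj[OF UU_T VV_T]) auto
  have VVsub: "VV \<subseteq> F (-m) ` VV"
  proof -
    have e1: "topspace TT - LE = VV" by auto
    have "VV \<subseteq> topspace TT - F (-m) ` LE" using WU by auto
    also have "\<dots> = F (-m) ` (topspace TT - LE)" by (rule img_compl[OF LE_T])
    finally show ?thesis unfolding e1 .
  qed
  have CV: "C \<subseteq> F (-m) ` VV"
  proof (rule ccontr)
    assume "\<not> C \<subseteq> F (-m) ` VV"
    then have "C \<subseteq> F (-m) ` UU" using side by blast
    moreover have "(x0, t0 + 1) \<in> F (-m) ` VV" by (rule subsetD[OF VVsub z(2)])
    ultimately show False using z(1) dUV by blast
  qed
  have pC: "p \<in> C" using p unfolding C_def R_def by (auto simp: mem_Times_iff)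
  have dLV: "F (-m) ` LE \<inter> F (-m) ` VV = {}" by (rule img_disj[OF LE_T VV_T]) auto
  have "p \<notin> F (-m) ` LE"
  proof
    assume "p \<in> F (-m) ` LE"
    moreover have "p \<in> F (-m) ` VV" by (rule subsetD[OF CV pC])
    ultimately show False using dLV by (metis IntI empty_iff)
  qed
  then show ?thesis by blast
qed

lemma region_compact:
  "compactin TT (F 1 ` LE \<inter> topspace S \<times> {t0..})"
proof -
  obtain c d where cd: "F 1 ` S0 \<subseteq> topspace S \<times> {c..d}"
    using level_bounds[OF hmF[of 1] cS, of t0] by blast
  note E = ends_lemma[OF hmF[of 1] cS conS ne cd]
  obtain x0 where x0: "x0 \<in> topspace S" using ne by blast
  have dUV: "F 1 ` UU \<inter> F 1 ` VV = {}" by (rule img_disj[OF UU_T VV_T]) auto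
  have Rd: "topspace S \<times> {d<..} \<subseteq> F 1 ` VV"
  proof (rule ccontr)
    assume nR: "\<not> topspace S \<times> {d<..} \<subseteq> F 1 ` VV"
    then have Lc: "topspace S \<times> {..<c} \<subseteq> F 1 ` VV" using E by blast
    have z1: "(x0, min c t0 - 1) \<in> topspace S \<times> {..<c}" using x0 by auto
    have z2: "(x0, min c t0 - 1) \<in> LE" using x0 by auto
    have "(x0, min c t0 - 1) \<in> F 1 ` UU" by (rule subsetD[OF up z2])
    moreover have "(x0, min c t0 - 1) \<in> F 1 ` VV" by (rule subsetD[OF Lc z1])
    ultimately show False using dUV by (metis IntI empty_iff)
  qed
  have dLV: "F 1 ` LE \<inter> F 1 ` VV = {}" by (rule img_disj[OF LE_T VV_T]) auto
  have sub: "F 1 ` LE \<inter> topspace S \<times> {t0..} \<subseteq> topspace S \<times> {t0..d}"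
  proof
    fix y assume y: "y \<in> F 1 ` LE \<inter> topspace S \<times> {t0..}"
    then have y1: "y \<in> F 1 ` LE" and y2: "y \<in> topspace S \<times> {t0..}" by (rule IntD1, rule IntD2)
    have "y \<notin> F 1 ` VV" using y1 dLV by (metis IntI empty_iff)
    then have "y \<notin> topspace S \<times> {d<..}" using Rd by blast
    then show "y \<in> topspace S \<times> {t0..d}" using y2 by (auto simp: mem_Times_iff)
  qed
  have cl1: "closedin TT (F 1 ` LE)"
  proof -
    have "closedin TT LE" by (simp add: closedin_prod_Times_iff)
    then show ?thesis using homeomorphic_map_closedness[OF hm_facts(3)[OF hmF[of 1]] LE_T] by simp
  qed
  have cl2: "closedin TT (topspace S \<times> {t0..})" by (simp add: closedin_prod_Times_iff)
  show ?thesis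
    by (rule closed_compactin[OF slab_compact[OF cS] sub]) (rule closedin_Int[OF cl1 cl2])
qed

lemma cover_lemma:
  "\<exists>Rg. compactin TT Rg \<and> (\<forall>p\<in>topspace TT. \<exists>k. \<exists>q\<in>Rg. p = F k q)"
proof (rule exI[of _ "F 1 ` LE \<inter> topspace S \<times> {t0..}"], intro conjI ballI)
  show "compactin TT (F 1 ` LE \<inter> topspace S \<times> {t0..})" by (rule region_compact)
  fix p assume p: "p \<in> topspace TT"
  obtain k1 where k1: "p \<in> F k1 ` LE" using exists_up[OF p] by blast
  obtain k2 where k2: "p \<notin> F k2 ` LE" using exists_down[OF p] by blast
  have lt: "k2 < k1"
  proof (rule ccontr)
    assume "\<not> k2 < k1"
    then have "F k1 ` LE \<subseteq> F k2 ` LE" by (intro Wmono) simp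
    then show False using k1 k2 by blast
  qed
  define P where "P = (\<lambda>n::nat. p \<in> F (k2 + int n) ` LE)"
  have Pex: "P (nat (k1 - k2))" unfolding P_def using lt k1 by simp
  define n where "n = (LEAST n. P n)"
  have Pn: "P n" unfolding n_def by (rule LeastI[of P, OF Pex])
  have n0: "n \<noteq> 0"
  proof
    assume "n = 0"
    then show False using Pn k2 unfolding P_def by simp
  qed
  have nP: "\<not> P (n - 1)"
  proof
    assume "P (n - 1)"
    then have "n \<le> n - 1" unfolding n_def by (rule Least_le)
    then show False using n0 by simp
  qed
  define k where "k = k2 + int n"
  have km: "k2 + int (n - 1) = k - 1" unfolding k_def using n0 by simp
  have pk: "p \<in> F k ` LE" using Pn unfolding P_def k_def .
  have pk1: "p \<notin> F (k - 1) ` LE" using nP unfolding P_def km .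
  obtain y where y: "y \<in> LE" and py: "p = F k y" using pk by blast
  have yT: "y \<in> topspace TT" using y LE_T by blast
  define q where "q = F 1 y"
  have pq: "p = F (k - 1) q"
  proof -
    have "F (k - 1 + 1) y = F (k - 1) (F 1 y)" by (rule Fadd[OF yT])
    then show ?thesis unfolding py q_def by simp
  qed
  have qT: "q \<in> topspace TT" unfolding q_def by (rule Fin[OF yT])
  have qL: "q \<notin> LE"
  proof
    assume "q \<in> LE"
    then have "p \<in> F (k - 1) ` LE" unfolding pq by (rule imageI)
    then show False using pk1 by simp
  qed
  have "q \<in> topspace S \<times> {t0..}" using qT qL by (auto simp: mem_Times_iff)
  moreover have "q \<in> F 1 ` LE" unfolding q_def using y by (rule imageI)
  ultimately have qR: "q \<in> F 1 ` LE \<inter> topspace S \<times> {t0..}" by (rule IntI[rotated])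
  show "\<exists>k. \<exists>q\<in>F 1 ` LE \<inter> topspace S \<times> {t0..}. p = F k q"
    by (rule exI[of _ "k - 1"], rule bexI[of _ q], rule pq, rule qR)
qed

end


lemma (in fam) main_cover:
  assumes disjH: "\<And>k. \<bar>k\<bar> \<ge> N \<Longrightarrow> F k ` (topspace S \<times> {t0}) \<inter> (topspace S \<times> {t0}) = {}"
    and N1: "N \<ge> 1"
    and propH: "\<And>K. compactin (prod_topology S euclideanreal) K \<Longrightarrow>
                  \<exists>B. \<forall>k. \<bar>k\<bar> > B \<longrightarrow> F k ` (topspace S \<times> {t0}) \<inter> K = {}"
  shows "\<exists>Rg. compactin (prod_topology S euclideanreal) Rg \<and>
           (\<forall>p\<in>topspace (prod_topology S euclideanreal). \<exists>k. \<exists>q\<in>Rg. p = F k q)"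
proof -
  have "\<exists>K0 \<in> {N, -N, N + N, -(N + N)}. LE \<subseteq> F K0 ` UU"
    by (rule choose_dir) (rule disjH, use N1 in simp)+
  then obtain K0 where K0: "K0 \<in> {N, -N, N + N, -(N + N)}" and up0: "LE \<subseteq> F K0 ` UU" by blast
  have K0ne: "\<bar>K0\<bar> \<ge> 1" using K0 N1 by auto
  interpret G0: fam_up S "\<lambda>k. F (K0 * k)" t0
  proof
    show "compact_space S" by (rule cS)
    show "connected_space S" by (rule conS)
    show "topspace S \<noteq> {}" by (rule ne)
    fix k :: int
    have "homeomorphic_maps TT TT (F (K0 * k)) (F (- (K0 * k)))" by (rule hmF)
    then show "homeomorphic_maps TT TT (F (K0 * k)) (F (K0 * - k))" by simp
  next
    fix j k :: int and x assume "x \<in> topspace TT"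
    then have "F (K0 * j + K0 * k) x = F (K0 * j) (F (K0 * k) x)" by (rule Fadd)
    then show "F (K0 * (j + k)) x = F (K0 * j) (F (K0 * k) x)" by (simp add: distrib_left)
  next
    show "LE \<subseteq> F (K0 * 1) ` UU" using up0 by simp
  next
    fix K assume "compactin TT K"
    then obtain B where B: "\<forall>k. \<bar>k\<bar> > B \<longrightarrow> F k ` S0 \<inter> K = {}" using propH by blast
    have "\<forall>k. \<bar>k\<bar> > B \<longrightarrow> F (K0 * k) ` S0 \<inter> K = {}"
    proof (intro allI impI)
      fix k :: int assume kB: "\<bar>k\<bar> > B"
      have "\<bar>K0 * k\<bar> \<ge> \<bar>k\<bar>"
      proof -
        have "\<bar>K0 * k\<bar> = \<bar>K0\<bar> * \<bar>k\<bar>" by (rule abs_mult)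
        also have "\<dots> \<ge> 1 * \<bar>k\<bar>" by (rule mult_right_mono[OF K0ne]) simp
        finally show ?thesis by simp
      qed
      then have "\<bar>K0 * k\<bar> > B" using kB by linarith
      then show "F (K0 * k) ` S0 \<inter> K = {}" using B by blast
    qed
    then show "\<exists>B. \<forall>k. \<bar>k\<bar> > B \<longrightarrow> F (K0 * k) ` S0 \<inter> K = {}" by blast
  qed
  obtain Rg where Rg: "compactin TT Rg" "\<forall>p\<in>topspace TT. \<exists>k. \<exists>q\<in>Rg. p = F (K0 * k) q"
    using G0.cover_lemma by blast
  show ?thesis
  proof (rule exI[of _ Rg], intro conjI ballI)
    show "compactin TT Rg" by (rule Rg(1))
    fix p assume "p \<in> topspace TT"
    then obtain k q where "q \<in> Rg" "p = F (K0 * k) q" using Rg(2) by blast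
    then show "\<exists>k. \<exists>q\<in>Rg. p = F k q" by blast
  qed
qed


lemma (in Metric_space) proper_family:
  fixes H :: "int \<Rightarrow> 'a \<Rightarrow> 'a"
  assumes HM: "\<And>k x. x \<in> M \<Longrightarrow> H k x \<in> M"
    and Hiso: "\<And>k x y. x \<in> M \<Longrightarrow> y \<in> M \<Longrightarrow> d (H k x) (H k y) = d x y"
    and Hadd: "\<And>j k x. x \<in> M \<Longrightarrow> H (j+k) x = H j (H k x)"
    and disc: "\<And>x. x \<in> M \<Longrightarrow> \<exists>e>0. \<forall>k. k \<noteq> 0 \<longrightarrow> e \<le> d (H k x) x"
    and L: "compactin mtopology L" and K: "compactin mtopology K" and Lne: "L \<noteq> {}"
  shows "finite {k. H k ` L \<inter> K \<noteq> {}}"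
proof -
  have "\<forall>x\<in>M. \<exists>e. e > 0 \<and> (\<forall>k. k \<noteq> 0 \<longrightarrow> e \<le> d (H k x) x)" using disc by blast
  then obtain eps where eps: "\<And>x. x \<in> M \<Longrightarrow> eps x > 0"
      "\<And>x k. x \<in> M \<Longrightarrow> k \<noteq> 0 \<Longrightarrow> eps x \<le> d (H k x) x"
    by (metis bchoice)
  have LM: "L \<subseteq> M" using L compactin_subset_topspace by fastforce
  have KM: "K \<subseteq> M" using K compactin_subset_topspace by fastforce
  have "\<exists>F. finite F \<and> F \<subseteq> (\<lambda>x. mball x (eps x / 4)) ` L \<and> L \<subseteq> \<Union>F"
  proof -
    have o: "\<forall>U \<in> (\<lambda>x. mball x (eps x / 4)) ` L. openin mtopology U" by blast
    have c: "L \<subseteq> \<Union>((\<lambda>x. mball x (eps x / 4)) ` L)"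
    proof
      fix x assume x: "x \<in> L"
      then have "x \<in> M" using LM by blast
      then have "x \<in> mball x (eps x / 4)" using eps(1) by simp
      then show "x \<in> \<Union>((\<lambda>x. mball x (eps x / 4)) ` L)" using x by blast
    qed
    show ?thesis using L o c unfolding compactin_def by blast
  qed
  then obtain F1 where F1: "finite F1" "F1 \<subseteq> (\<lambda>x. mball x (eps x / 4)) ` L" "L \<subseteq> \<Union>F1" by blast
  obtain X where X: "X \<subseteq> L" "finite X" "F1 = (\<lambda>x. mball x (eps x / 4)) ` X"
    using finite_subset_image[OF F1(1) F1(2)] by blast
  have Lcov: "\<forall>s\<in>L. \<exists>x\<in>X. s \<in> mball x (eps x / 4)" using F1(3) X(3) by blast
  have Xne: "X \<noteq> {}" using Lne Lcov by blast
  have XM: "X \<subseteq> M" using X(1) LM by blast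
  define \<delta> where "\<delta> = Min ((\<lambda>x. eps x / 4) ` X)"
  have dpos: "\<delta> > 0" unfolding \<delta>_def using X(2) Xne XM eps(1) by (subst Min_gr_iff) auto
  have dle: "\<And>x. x \<in> X \<Longrightarrow> \<delta> \<le> eps x / 4" unfolding \<delta>_def using X(2) by (intro Min_le) auto
  have "\<exists>F. finite F \<and> F \<subseteq> (\<lambda>y. mball y \<delta>) ` K \<and> K \<subseteq> \<Union>F"
  proof -
    have o: "\<forall>U \<in> (\<lambda>y. mball y \<delta>) ` K. openin mtopology U" by blast
    have c: "K \<subseteq> \<Union>((\<lambda>y. mball y \<delta>) ` K)"
    proof
      fix y assume y: "y \<in> K"
      then have "y \<in> M" using KM by blast
      then have "y \<in> mball y \<delta>" using dpos by simp
      then show "y \<in> \<Union>((\<lambda>y. mball y \<delta>) ` K)" using y by blast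
    qed
    show ?thesis using K o c unfolding compactin_def by blast
  qed
  then obtain F2 where F2: "finite F2" "F2 \<subseteq> (\<lambda>y. mball y \<delta>) ` K" "K \<subseteq> \<Union>F2" by blast
  obtain Y where Y: "Y \<subseteq> K" "finite Y" "F2 = (\<lambda>y. mball y \<delta>) ` Y"
    using finite_subset_image[OF F2(1) F2(2)] by blast
  have Kcov: "\<forall>t\<in>K. \<exists>y\<in>Y. t \<in> mball y \<delta>" using F2(3) Y(3) by blast
  define A where "A = {k. H k ` L \<inter> K \<noteq> {}}"
  have "\<forall>k\<in>A. \<exists>p. snd (snd p) \<in> L \<and> H k (snd (snd p)) \<in> K \<and> fst p \<in> X \<and>
          snd (snd p) \<in> mball (fst p) (eps (fst p) / 4) \<and> fst (snd p) \<in> Y \<and> H k (snd (snd p)) \<in> mball (fst (snd p)) \<delta>"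
  proof
    fix k assume "k \<in> A"
    then obtain s where s: "s \<in> L" "H k s \<in> K" unfolding A_def by blast
    obtain x where x: "x \<in> X" "s \<in> mball x (eps x / 4)" using Lcov s(1) by blast
    obtain y where y: "y \<in> Y" "H k s \<in> mball y \<delta>" using Kcov s(2) by blast
    show "\<exists>p. snd (snd p) \<in> L \<and> H k (snd (snd p)) \<in> K \<and> fst p \<in> X \<and>
          snd (snd p) \<in> mball (fst p) (eps (fst p) / 4) \<and> fst (snd p) \<in> Y \<and> H k (snd (snd p)) \<in> mball (fst (snd p)) \<delta>"
      by (rule exI[of _ "(x, y, s)"]) (unfold fst_conv snd_conv, intro conjI, (fact s x y)+)
  qed
  then obtain f where f: "\<And>k. k \<in> A \<Longrightarrow> snd (snd (f k)) \<in> L \<and> H k (snd (snd (f k))) \<in> K \<and> fst (f k) \<in> X \<and>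
          snd (snd (f k)) \<in> mball (fst (f k)) (eps (fst (f k)) / 4) \<and> fst (snd (f k)) \<in> Y \<and>
          H k (snd (snd (f k))) \<in> mball (fst (snd (f k))) \<delta>"
    by (metis bchoice)
  define g where "g = (\<lambda>k. (fst (f k), fst (snd (f k))))"
  have inj: "inj_on g A"
  proof (rule inj_onI)
    fix k j assume k: "k \<in> A" and j: "j \<in> A" and gkj: "g k = g j"
    define x where "x = fst (f k)"
    define y where "y = fst (snd (f k))"
    define s where "s = snd (snd (f k))"
    define s' where "s' = snd (snd (f j))"
    have xj: "x = fst (f j)" and yj: "y = fst (snd (f j))" using gkj unfolding g_def x_def y_def by auto
    have fk: "s \<in> L" "x \<in> X" "s \<in> mball x (eps x / 4)" "y \<in> Y" "H k s \<in> mball y \<delta>"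
      using f[OF k] unfolding x_def y_def s_def by auto
    have fj: "s' \<in> L" "H j s' \<in> mball y \<delta>" "s' \<in> mball x (eps x / 4)"
      using f[OF j] unfolding xj yj s'_def by auto
    have xM: "x \<in> M" using fk(2) XM by blast
    have sM: "s \<in> M" "s' \<in> M" using fk(1) fj(1) LM by blast+
    have yM: "y \<in> M" using fk(4) Y(1) KM by blast
    have d1: "d x s < eps x / 4" using fk(3) by simp
    have d2: "d y (H k s) < \<delta>" using fk(5) by simp
    have d3: "d y (H j s') < \<delta>" using fj(2) by simp
    have d4: "d x s' < eps x / 4" using fj(3) by simp
    have dd: "\<delta> \<le> eps x / 4" using dle fk(2) by blast
    have HkxM: "H k x \<in> M" "H j x \<in> M" "H k s \<in> M" "H j s' \<in> M" using HM xM sM by blast+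
    have t1: "d (H k x) (H j x) \<le> d (H k x) (H k s) + d (H k s) (H j x)"
      by (rule triangle) (use HkxM in auto)
    have t2: "d (H k s) (H j x) \<le> d (H k s) y + d y (H j x)"
      by (rule triangle) (use HkxM yM in auto)
    have t3: "d y (H j x) \<le> d y (H j s') + d (H j s') (H j x)"
      by (rule triangle) (use HkxM yM in auto)
    have e1: "d (H k x) (H k s) = d x s" by (rule Hiso[OF xM sM(1)])
    have e2: "d (H j s') (H j x) = d s' x" by (rule Hiso[OF sM(2) xM])
    have e3: "d (H k s) y = d y (H k s)" by (rule commute)
    have e4: "d s' x = d x s'" by (rule commute)
    have lt: "d (H k x) (H j x) < eps x" using t1 t2 t3 e1 e2 e3 e4 d1 d2 d3 d4 dd by linarith
    show "k = j"
    proof (rule ccontr)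
      assume kj: "k \<noteq> j"
      have "H k x = H j (H (k - j) x)" using Hadd[OF xM, of j "k - j"] by simp
      then have "d (H k x) (H j x) = d (H (k - j) x) x" using Hiso[OF HM[OF xM] xM] by simp
      moreover have "eps x \<le> d (H (k - j) x) x" using eps(2)[OF xM] kj by simp
      ultimately show False using lt by linarith
    qed
  qed
  have "g ` A \<subseteq> X \<times> Y" using f unfolding g_def by auto
  then have "finite A" using inj_on_finite[OF inj] X(2) Y(2) by blast
  then show ?thesis unfolding A_def .
qed


lemma orbit_move:
  assumes ga: "group_action G E \<phi>" and g: "g \<in> carrier G" and x: "x \<in> E"
  shows "orbit G \<phi> (\<phi> g x) = orbit G \<phi> x"
proof -
  interpret group_action G E \<phi> by (rule ga)
  have grp: "group G" using group_hom group_hom.axioms(1) by blast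
  have gx: "\<phi> g x \<in> E" using element_image[OF g x refl] .
  show ?thesis
  proof
    show "orbit G \<phi> (\<phi> g x) \<subseteq> orbit G \<phi> x"
    proof
      fix z assume "z \<in> orbit G \<phi> (\<phi> g x)"
      then obtain h where h: "h \<in> carrier G" "z = \<phi> h (\<phi> g x)" unfolding orbit_def by blast
      have "z = \<phi> (h \<otimes>\<^bsub>G\<^esub> g) x" using composition_rule[OF x h(1) g] h(2) by simp
      moreover have "h \<otimes>\<^bsub>G\<^esub> g \<in> carrier G" using grp h(1) g by (simp add: group.is_monoid monoid.m_closed)
      ultimately show "z \<in> orbit G \<phi> x" unfolding orbit_def by blast
    qed
  next
    show "orbit G \<phi> x \<subseteq> orbit G \<phi> (\<phi> g x)"
    proof
      fix z assume "z \<in> orbit G \<phi> x"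
      then obtain h where h: "h \<in> carrier G" "z = \<phi> h x" unfolding orbit_def by blast
      have ig: "inv\<^bsub>G\<^esub> g \<in> carrier G" using grp g by (simp add: group.inv_closed)
      have hig: "h \<otimes>\<^bsub>G\<^esub> inv\<^bsub>G\<^esub> g \<in> carrier G" using grp h(1) ig by (simp add: group.is_monoid monoid.m_closed)
      have "\<phi> (inv\<^bsub>G\<^esub> g) (\<phi> g x) = x" by (rule orbit_sym_aux[OF g x refl])
      then have "\<phi> (h \<otimes>\<^bsub>G\<^esub> inv\<^bsub>G\<^esub> g) (\<phi> g x) = z"
        using composition_rule[OF gx h(1) ig] h(2) by simp
      then show "z \<in> orbit G \<phi> (\<phi> g x)" using hig unfolding orbit_def by blast
    qed
  qed
qed

theorem theorem2p1:
  fixes S :: "'a topology"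
    and G :: "('g, 'm) monoid_scheme"
    and \<phi> :: "'g \<Rightarrow> ('a \<times> real) \<Rightarrow> ('a \<times> real)"
    and d :: "('a \<times> real) \<Rightarrow> ('a \<times> real) \<Rightarrow> real"
    and \<gamma> :: 'g and t0 :: real and n0 :: nat
    and Q :: "('a \<times> real) set topology"
  assumes surf: "manifold_with_boundary 2 S"
    and cpt: "compact_space S"
    and conn: "connected_space S"
    and orient: "orientable_manifold 3 (prod_topology S euclideanreal)"
    and grp: "group G"
    and act: "covering_action G (prod_topology S euclideanreal) \<phi>"
    and metric: "Metric_space (topspace (prod_topology S euclideanreal)) d"
    and metric_top: "Metric_space.mtopology (topspace (prod_topology S euclideanreal)) d
                       = prod_topology S euclideanreal"
    and isom: "\<forall>g\<in>carrier G. \<forall>x\<in>topspace (prod_topology S euclideanreal).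
                 \<forall>y\<in>topspace (prod_topology S euclideanreal). d (\<phi> g x) (\<phi> g y) = d x y"
    and gam: "\<gamma> \<in> carrier G"
    and inf_order: "\<forall>n::nat. n > 0 \<longrightarrow> \<gamma> [^]\<^bsub>G\<^esub> n \<noteq> \<one>\<^bsub>G\<^esub>"
    and n0: "n0 > 0"
    and disj: "\<forall>n::nat. n > n0 \<longrightarrow>
                 \<phi> (\<gamma> [^]\<^bsub>G\<^esub> n) ` (topspace S \<times> {t0}) \<inter> (topspace S \<times> {t0}) = {}"
    and quot: "quotient_map (prod_topology S euclideanreal) Q (orbit G \<phi>)"
  shows "compact_space Q"
proof -
  let ?T = "prod_topology S euclideanreal"
  let ?M = "topspace (prod_topology S euclideanreal)"
  have surjQ: "orbit G \<phi> ` ?M = topspace Q" by (rule quotient_imp_surjective_map[OF quot])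
  have contQ: "continuous_map ?T Q (orbit G \<phi>)" by (rule quotient_imp_continuous_map[OF quot])
  show ?thesis
  proof (cases "topspace S = {}")
    case True
    then have "topspace Q = {}" using surjQ by simp
    then show ?thesis unfolding compact_space_def by simp
  next
    case False
    note ne = False
    have ga: "group_action G ?M \<phi>" using act unfolding covering_action_def by blast
    interpret GA: group_action G ?M \<phi> by (rule ga)
    interpret GR: group G by (rule grp)
    interpret MS: Metric_space ?M d by (rule metric)
    define H where "H = (\<lambda>k::int. \<phi> (\<gamma> [^]\<^bsub>G\<^esub> k))"
    have powc: "\<And>k::int. \<gamma> [^]\<^bsub>G\<^esub> k \<in> carrier G" using gam by simp
    have HM: "\<And>k x. x \<in> ?M \<Longrightarrow> H k x \<in> ?M" unfolding H_def using GA.element_image powc by blast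
    have Hadd: "\<And>j k x. x \<in> ?M \<Longrightarrow> H (j+k) x = H j (H k x)"
      unfolding H_def using GR.int_pow_mult[OF gam] GA.composition_rule powc by simp
    have H0: "\<And>x. x \<in> ?M \<Longrightarrow> H 0 x = x"
      unfolding H_def by (metis GA.id_eq_one int_pow_0 restrict_apply')
    have Hiso: "\<And>k x y. x \<in> ?M \<Longrightarrow> y \<in> ?M \<Longrightarrow> d (H k x) (H k y) = d x y"
      unfolding H_def using isom powc by blast
    have Hcont: "\<And>k. continuous_map ?T ?T (H k)"
    proof -
      fix k
      have "continuous_map MS.mtopology MS.mtopology (H k)"
        unfolding MS.metric_continuous_map[OF metric]
      proof
        show "H k ` ?M \<subseteq> ?M" using HM by blast
        show "\<forall>a\<in>?M. \<forall>\<epsilon>>0. \<exists>\<delta>>0. \<forall>x. x \<in> ?M \<and> d a x < \<delta> \<longrightarrow> d (H k a) (H k x) < \<epsilon>"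
          using Hiso by metis
      qed
      then show "continuous_map ?T ?T (H k)" unfolding metric_top .
    qed
    have hm: "\<And>k. homeomorphic_maps ?T ?T (H k) (H (-k))"
    proof -
      fix k
      have a1: "\<forall>x\<in>?M. H (-k) (H k x) = x"
      proof
        fix x assume x: "x \<in> ?M"
        have "H (-k + k) x = H (-k) (H k x)" by (rule Hadd[OF x])
        then show "H (-k) (H k x) = x" using H0[OF x] by simp
      qed
      have a2: "\<forall>x\<in>?M. H k (H (-k) x) = x"
      proof
        fix x assume x: "x \<in> ?M"
        have "H (k + -k) x = H k (H (-k) x)" by (rule Hadd[OF x])
        then show "H k (H (-k) x) = x" using H0[OF x] by simp
      qed
      show "homeomorphic_maps ?T ?T (H k) (H (-k))"
        unfolding homeomorphic_maps_def using Hcont a1 a2 by blast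
    qed
    interpret FM: fam S H t0
    proof
      show "compact_space S" by (rule cpt)
      show "connected_space S" by (rule conn)
      show "topspace S \<noteq> {}" by (rule ne)
      show "\<And>k. homeomorphic_maps ?T ?T (H k) (H (-k))" by (rule hm)
      show "\<And>j k x. x \<in> ?M \<Longrightarrow> H (j+k) x = H j (H k x)" by (rule Hadd)
    qed
    have ord: "\<And>k::int. k \<noteq> 0 \<Longrightarrow> \<gamma> [^]\<^bsub>G\<^esub> k \<noteq> \<one>\<^bsub>G\<^esub>"
    proof -
      fix k :: int assume k: "k \<noteq> 0"
      have pos: "\<gamma> [^]\<^bsub>G\<^esub> (int n) \<noteq> \<one>\<^bsub>G\<^esub>" if "n > 0" for n :: nat
        using inf_order that by (simp add: int_pow_int)
      show "\<gamma> [^]\<^bsub>G\<^esub> k \<noteq> \<one>\<^bsub>G\<^esub>"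
      proof (cases "k > 0")
        case True
        then show ?thesis using pos[of "nat k"] by simp
      next
        case False
        then have kn: "-k = int (nat (-k))" "nat (-k) > 0" using k by simp_all
        have "\<gamma> [^]\<^bsub>G\<^esub> k = inv\<^bsub>G\<^esub> (\<gamma> [^]\<^bsub>G\<^esub> (-k))"
          using GR.int_pow_neg[OF gam, of "-k"] by simp
        moreover have "\<gamma> [^]\<^bsub>G\<^esub> (-k) \<noteq> \<one>\<^bsub>G\<^esub>" using pos[OF kn(2)] kn(1) by simp
        ultimately show ?thesis using GR.inv_eq_1_iff powc by auto
      qed
    qed
    have disc: "\<And>x. x \<in> ?M \<Longrightarrow> \<exists>e>0. \<forall>k. k \<noteq> 0 \<longrightarrow> e \<le> d (H k x) x"
    proof -
      fix x assume x: "x \<in> ?M"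
      obtain U where U: "openin ?T U" "x \<in> U"
          "\<forall>g\<in>carrier G. g \<noteq> \<one>\<^bsub>G\<^esub> \<longrightarrow> \<phi> g ` U \<inter> U = {}"
        using act x unfolding covering_action_def by blast
      have "openin MS.mtopology U" using U(1) metric_top by simp
      then obtain r where r: "r > 0" "MS.mball x r \<subseteq> U" using U(2) MS.openin_mtopology by blast
      have "\<forall>k. k \<noteq> 0 \<longrightarrow> r \<le> d (H k x) x"
      proof (intro allI impI)
        fix k :: int assume k: "k \<noteq> 0"
        show "r \<le> d (H k x) x"
        proof (rule ccontr)
          assume "\<not> r \<le> d (H k x) x"
          then have "d x (H k x) < r" using MS.commute by (simp add: not_le)
          then have "H k x \<in> MS.mball x r" using x HM[OF x] MS.in_mball by blast
          then have "H k x \<in> U" using r(2) by blast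
          moreover have "H k x \<in> \<phi> (\<gamma> [^]\<^bsub>G\<^esub> k) ` U" unfolding H_def using U(2) by blast
          ultimately show False using U(3) powc ord[OF k] by blast
        qed
      qed
      then show "\<exists>e>0. \<forall>k. k \<noteq> 0 \<longrightarrow> e \<le> d (H k x) x" using r(1) by blast
    qed
    define N where "N = int n0 + 1"
    have posdisj: "\<And>k. k \<ge> N \<Longrightarrow> H k ` (topspace S \<times> {t0}) \<inter> (topspace S \<times> {t0}) = {}"
    proof -
      fix k assume k: "k \<ge> N"
      then have kn: "k = int (nat k)" "nat k > n0" unfolding N_def by simp_all
      have e: "\<gamma> [^]\<^bsub>G\<^esub> k = \<gamma> [^]\<^bsub>G\<^esub> (nat k)" using kn(1) int_pow_int by metis
      show "H k ` (topspace S \<times> {t0}) \<inter> (topspace S \<times> {t0}) = {}"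
        unfolding H_def e by (rule disj[rule_format, OF kn(2)])
    qed
    have disjH: "\<And>k. \<bar>k\<bar> \<ge> N \<Longrightarrow> H k ` (topspace S \<times> {t0}) \<inter> (topspace S \<times> {t0}) = {}"
    proof -
      fix k assume k: "\<bar>k\<bar> \<ge> N"
      show "H k ` (topspace S \<times> {t0}) \<inter> (topspace S \<times> {t0}) = {}"
      proof (cases "k \<ge> 0")
        case True
        then show ?thesis using posdisj k by simp
      next
        case False
        show ?thesis
        proof (rule equals0I)
          fix y assume y: "y \<in> H k ` (topspace S \<times> {t0}) \<inter> (topspace S \<times> {t0})"
          have y1: "y \<in> H k ` (topspace S \<times> {t0})" using y by (rule IntD1)
          have yS0: "y \<in> topspace S \<times> {t0}" using y by (rule IntD2)
          obtain s where s: "y = H k s" "s \<in> topspace S \<times> {t0}" using y1 by (rule imageE)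
          have sM: "s \<in> ?M" using s(2) by auto
          have "H (-k + k) s = H (-k) (H k s)" by (rule Hadd[OF sM])
          then have hs: "H (-k) y = s" using H0[OF sM] s(1) by simp
          have "s \<in> H (-k) ` (topspace S \<times> {t0})" by (rule image_eqI[of s "H (-k)" y, OF hs[symmetric] yS0])
          then have sin: "s \<in> H (-k) ` (topspace S \<times> {t0}) \<inter> (topspace S \<times> {t0})" using s(2) by (rule IntI)
          have kN: "-k \<ge> N" using k False by simp
          have "H (-k) ` (topspace S \<times> {t0}) \<inter> (topspace S \<times> {t0}) = {}" by (rule posdisj[OF kN])
          then show False using sin by (metis empty_iff)
        qed
      qed
    qed
    have propH: "\<And>K. compactin ?T K \<Longrightarrow> \<exists>B. \<forall>k. \<bar>k\<bar> > B \<longrightarrow> H k ` (topspace S \<times> {t0}) \<inter> K = {}"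
    proof -
      fix K assume K: "compactin ?T K"
      have L: "compactin MS.mtopology (topspace S \<times> {t0})"
        unfolding metric_top using slab_compact[OF cpt, of t0 t0] by simp
      have K': "compactin MS.mtopology K" unfolding metric_top by (rule K)
      have Lne: "topspace S \<times> {t0} \<noteq> {}" using ne by simp
      have fin: "finite {k. H k ` (topspace S \<times> {t0}) \<inter> K \<noteq> {}}"
        by (rule MS.proper_family[OF HM Hiso Hadd disc L K' Lne])
      define B where "B = Max (insert 0 (abs ` {k. H k ` (topspace S \<times> {t0}) \<inter> K \<noteq> {}}))"
      have "\<forall>k. \<bar>k\<bar> > B \<longrightarrow> H k ` (topspace S \<times> {t0}) \<inter> K = {}"
      proof (intro allI impI)
        fix k :: int assume kB: "\<bar>k\<bar> > B"
        show "H k ` (topspace S \<times> {t0}) \<inter> K = {}"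
        proof (rule ccontr)
          assume "H k ` (topspace S \<times> {t0}) \<inter> K \<noteq> {}"
          then have "k \<in> {k. H k ` (topspace S \<times> {t0}) \<inter> K \<noteq> {}}" by simp
          then have "\<bar>k\<bar> \<in> insert 0 (abs ` {k. H k ` (topspace S \<times> {t0}) \<inter> K \<noteq> {}})" by (rule insertI2[OF imageI])
          then have "\<bar>k\<bar> \<le> B" unfolding B_def by (rule Max_ge[rotated]) (use fin in simp)
          then show False using kB by simp
        qed
      qed
      then show "\<exists>B. \<forall>k. \<bar>k\<bar> > B \<longrightarrow> H k ` (topspace S \<times> {t0}) \<inter> K = {}" by blast
    qed
    have N1: "N \<ge> 1" unfolding N_def by simp
    obtain Rg where Rg: "compactin ?T Rg" "\<forall>p\<in>?M. \<exists>k. \<exists>q\<in>Rg. p = H k q"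
      using FM.main_cover[OF disjH N1 propH] by blast
    have RgM: "Rg \<subseteq> ?M" using Rg(1) compactin_subset_topspace by blast
    have "orbit G \<phi> ` Rg = topspace Q"
    proof
      show "orbit G \<phi> ` Rg \<subseteq> topspace Q" using surjQ RgM by blast
      show "topspace Q \<subseteq> orbit G \<phi> ` Rg"
      proof
        fix z assume "z \<in> topspace Q"
        then obtain p where p: "p \<in> ?M" "z = orbit G \<phi> p" using surjQ by blast
        then obtain k q where kq: "q \<in> Rg" "p = H k q" using Rg(2) by blast
        have "orbit G \<phi> p = orbit G \<phi> q"
          unfolding kq(2) H_def by (rule orbit_move[OF ga powc]) (use kq(1) RgM in blast)
        then show "z \<in> orbit G \<phi> ` Rg" using p(2) kq(1) by blast
      qed
    qed
    moreover have "compactin Q (orbit G \<phi> ` Rg)" by (rule image_compactin[OF Rg(1) contQ])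
    ultimately show ?thesis unfolding compact_space_def by simp
  qed
qed

end
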